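(* Let $V$ and $\mathcal{N}_7^V$ be as follows: $V:\mathbb{C}^7\to\mathbb{C}^3\otimes\mathbb{C}^3$ is any isometry whose range is the orthogonal complement of $\operatorname{span}\{\ket{\phi_3^+},\ket{0}\otimes\ket{1}\}$ with $\ket{\phi_3^+}=\frac1{\sqrt3}\sum_{k=0}^2\ket{kk}$, and $\mathcal{N}_7^V(\rho)=\operatorname{Tr}_E(V\rho V^\dagger)$. Then for every $d\in\mathbb{N}$, $n\in\mathbb{N}$ and $M\in\mathcal{P}^{n\to n}(\mathcal{Q}_d)$ one has $\operatorname{Tr}M\le d$, so $\mathcal{F}_c(\mathcal{Q}_6)=6$; and $$\mathcal{F}_c^{\min}(\mathcal{N}_7^V)\ \ge\ \tfrac{20}{3}\ >\ 6=\mathcal{F}_c(\mathcal{Q}_6).$$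
   Context: $\mathcal{P}^{n\to m}(\mathcal{N}(\mathcal{Q}_{d_A}))$ is the set of $n\times m$ matrices $P_{ij}=\operatorname{Tr}[\Lambda_j\mathcal{N}(\rho_i)]$ with $\rho_i$ density matrices on the input space and $\{\Lambda_j\}$ a POVM on the output space; $\mathcal{P}^{n\to m}(\mathcal{Q}_d)$ is this set for the identity channel on $\mathcal{L}(\mathbb{C}^d)$. The classical transmission fidelity of a channel $\mathcal{N}$ is $\mathcal{F}_c(\mathcal{N})=\sup_{n\in\mathbb{N}}\sup_{P\in\mathcal{P}^{n\to n}(\mathcal{N}(\mathcal{Q}_{d_A}))}\operatorname{Tr}P$. For a channel with isometry $V:\mathbb{C}^{d_A}\to\mathbb{C}^{d_B}\otimes\mathbb{C}^{d_E}$, $\mathcal{P}^{n\to m}_{\min}(\mathcal{N},V)$ is the set of matrices $P_{ij}=\sum_{l,k}q(j\mid l,k)\operatorname{Tr}[(\Lambda^B_l\otimes\Lambda^E_k)V\rho_iV^\dagger]$ with independent finite-outcome POVMs $\{\Lambda^B_l\}$ on $\mathbb{C}^{d_B}$, $\{\Lambda^E_k\}$ on $\mathbb{C}^{d_E}$ and stochastic post-processing $q$; and $\mathcal{F}_c^{\min}(\mathcal{N})=\sup_n\sup_{P\in\mathcal{P}^{n\to n}_{\min}(\mathcal{N},V)}\operatorname{Tr}P$. *)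

theory Defs
  imports "HOL-Library.Extended_Real" "Jordan_Normal_Form.Schur_Decomposition"
begin

definition mtrace :: "'a::comm_ring_1 mat \<Rightarrow> 'a" where
  "mtrace A = (\<Sum>i<dim_row A. A $$ (i,i))"

definition cinner :: "complex vec \<Rightarrow> complex vec \<Rightarrow> complex" where
  "cinner u w = (\<Sum>i<dim_vec u. cnj (u $ i) * w $ i)"

definition psd_mat :: "nat \<Rightarrow> complex mat \<Rightarrow> bool" where
  "psd_mat d A \<longleftrightarrow> A \<in> carrier_mat d d \<and> mat_adjoint A = A \<and>
     (\<forall>v \<in> carrier_vec d. 0 \<le> Re (cinner v (A *\<^sub>v v)))"

definition density :: "nat \<Rightarrow> complex mat \<Rightarrow> bool" where
  "density d \<rho> \<longleftrightarrow> psd_mat d \<rho> \<and> mtrace \<rho> = 1"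

definition POVM :: "nat \<Rightarrow> nat \<Rightarrow> (nat \<Rightarrow> complex mat) \<Rightarrow> bool" where
  "POVM d m \<Lambda> \<longleftrightarrow> (\<forall>j<m. psd_mat d (\<Lambda> j)) \<and>
     (\<forall>a<d. \<forall>b<d. (\<Sum>j<m. \<Lambda> j $$ (a,b)) = (1\<^sub>m d) $$ (a,b))"

text \<open>Kronecker (tensor) products; basis index of |a b> is a * dim_B + b.\<close>
definition kron_mat :: "complex mat \<Rightarrow> complex mat \<Rightarrow> complex mat" where
  "kron_mat A B = mat (dim_row A * dim_row B) (dim_col A * dim_col B)
     (\<lambda>(i,j). A $$ (i div dim_row B, j div dim_col B) * B $$ (i mod dim_row B, j mod dim_col B))"

definition kron_vec :: "complex vec \<Rightarrow> complex vec \<Rightarrow> complex vec" where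
  "kron_vec u v = vec (dim_vec u * dim_vec v) (\<lambda>i. u $ (i div dim_vec v) * v $ (i mod dim_vec v))"

text \<open>P^{n->m}(N(Q_{dA})) for a map N from operators on C^dA to operators on C^dB.
  Entries Tr[Lambda_j N(rho_i)] are real; stored as a real n x m matrix.\<close>
definition P_set :: "nat \<Rightarrow> nat \<Rightarrow> (complex mat \<Rightarrow> complex mat) \<Rightarrow> nat \<Rightarrow> nat \<Rightarrow> real mat set" where
  "P_set dA dB N n m = {P \<in> carrier_mat n m. \<exists>\<rho> \<Lambda>.
      (\<forall>i<n. density dA (\<rho> i)) \<and> POVM dB m \<Lambda> \<and>
      (\<forall>i<n. \<forall>j<m. P $$ (i,j) = Re (mtrace (\<Lambda> j * N (\<rho> i))))}"

definition F_c :: "nat \<Rightarrow> nat \<Rightarrow> (complex mat \<Rightarrow> complex mat) \<Rightarrow> ereal" where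
  "F_c dA dB N = (SUP n. SUP P \<in> P_set dA dB N n n. ereal (mtrace P))"

definition P_min :: "complex mat \<Rightarrow> nat \<Rightarrow> nat \<Rightarrow> nat \<Rightarrow> nat \<Rightarrow> nat \<Rightarrow> real mat set" where
  "P_min V dA dB dE n m = {P \<in> carrier_mat n m. \<exists>\<rho> L \<Lambda>B K \<Lambda>E (q :: nat \<Rightarrow> nat \<Rightarrow> nat \<Rightarrow> real).
      (\<forall>i<n. density dA (\<rho> i)) \<and> POVM dB L \<Lambda>B \<and> POVM dE K \<Lambda>E \<and>
      (\<forall>l<L. \<forall>k<K. (\<forall>j<m. 0 \<le> q j l k) \<and> (\<Sum>j<m. q j l k) = 1) \<and>
      (\<forall>i<n. \<forall>j<m. P $$ (i,j) = (\<Sum>l<L. \<Sum>k<K. q j l k *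
          Re (mtrace (kron_mat (\<Lambda>B l) (\<Lambda>E k) * (V * \<rho> i * mat_adjoint V)))))}"

definition F_c_min :: "complex mat \<Rightarrow> nat \<Rightarrow> nat \<Rightarrow> nat \<Rightarrow> ereal" where
  "F_c_min V dA dB dE = (SUP n. SUP P \<in> P_min V dA dB dE n n. ereal (mtrace P))"

definition span2 :: "complex vec \<Rightarrow> complex vec \<Rightarrow> complex vec set" where
  "span2 u v = {a \<cdot>\<^sub>v u + b \<cdot>\<^sub>v v | a b. True}"

definition orth_compl :: "nat \<Rightarrow> complex vec set \<Rightarrow> complex vec set" where
  "orth_compl n S = {w \<in> carrier_vec n. \<forall>u \<in> S. cinner u w = 0}"

definition ket3 :: "nat \<Rightarrow> complex vec" where "ket3 k = unit_vec 3 k"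

definition phi3_plus :: "complex vec" where
  "phi3_plus = (1 / complex_of_real (sqrt 3)) \<cdot>\<^sub>v
     (kron_vec (ket3 0) (ket3 0) + kron_vec (ket3 1) (ket3 1) + kron_vec (ket3 2) (ket3 2))"

definition ket01 :: "complex vec" where "ket01 = kron_vec (ket3 0) (ket3 1)"

end

theory Submission
  imports Defs
begin

lemma adj_dims[simp]: "dim_row (mat_adjoint A) = dim_col A" "dim_col (mat_adjoint A) = dim_row A"
  unfolding mat_adjoint_def by (simp_all add: mat_of_rows_def)

lemma adj_idx[simp]: "i < dim_col A \<Longrightarrow> j < dim_row A \<Longrightarrow> mat_adjoint A $$ (i,j) = cnj (A $$ (j,i))"
  unfolding mat_adjoint_def by (simp add: mat_of_rows_def)

definition outer :: "complex vec \<Rightarrow> complex mat" where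
  "outer u = mat (dim_vec u) (dim_vec u) (\<lambda>(i,j). u$i * cnj (u$j))"

lemma outer_dims[simp]: "dim_row (outer u) = dim_vec u" "dim_col (outer u) = dim_vec u"
  unfolding outer_def by auto

lemma outer_idx[simp]: "i < dim_vec u \<Longrightarrow> j < dim_vec u \<Longrightarrow> outer u $$ (i,j) = u$i * cnj (u$j)"
  unfolding outer_def by auto

lemma outer_carrier: "u \<in> carrier_vec d \<Longrightarrow> outer u \<in> carrier_mat d d"
  by (rule carrier_matI) (auto dest: carrier_vecD)

lemma mult_outer_vec: assumes "dim_vec v = dim_vec u" shows "outer u *\<^sub>v v = cinner u v \<cdot>\<^sub>v u"
proof (rule eq_vecI)
  fix i assume "i < dim_vec (cinner u v \<cdot>\<^sub>v u)"
  then have i: "i < dim_vec u" by simp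
  have "(outer u *\<^sub>v v) $ i = (\<Sum>k<dim_vec u. u$i * cnj (u$k) * v$k)"
    using i assms by (simp add: scalar_prod_def atLeast0LessThan mult.commute)
  also have "\<dots> = cinner u v * u $ i"
    unfolding cinner_def assms by (simp add: sum_distrib_left sum_distrib_right mult_ac)
  finally show "(outer u *\<^sub>v v) $ i = (cinner u v \<cdot>\<^sub>v u) $ i" using i by simp
qed simp

lemma cinner_smult_right: "dim_vec w = dim_vec u \<Longrightarrow> cinner u (c \<cdot>\<^sub>v w) = c * cinner u w"
  unfolding cinner_def by (auto simp: sum_distrib_left algebra_simps)

lemma cinner_swap: "dim_vec w = dim_vec u \<Longrightarrow> cinner w u = cnj (cinner u w)"
  unfolding cinner_def by (auto simp: mult.commute)

lemma outer_psd: assumes "u \<in> carrier_vec d" shows "psd_mat d (outer u)"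
proof -
  have "mat_adjoint (outer u) = outer u"
    using assms by (intro eq_matI) auto
  moreover have "0 \<le> Re (cinner v (outer u *\<^sub>v v))" if "v \<in> carrier_vec d" for v
  proof -
    have "cinner v (outer u *\<^sub>v v) = cinner u v * cnj (cinner u v)"
      using that assms cinner_swap[of v u] by (simp add: mult_outer_vec cinner_smult_right)
    also have "\<dots> = complex_of_real ((cmod (cinner u v))^2)"
      using complex_norm_square[of "cinner u v"] by simp
    finally show ?thesis by simp
  qed
  ultimately show ?thesis unfolding psd_mat_def using outer_carrier[OF assms] by auto
qed

lemma mtrace_outer: "mtrace (outer u) = cinner u u"
  unfolding mtrace_def cinner_def by (auto simp: mult.commute intro!: sum.cong)

lemma mtrace_outer_outer: assumes "dim_vec w = dim_vec u"
  shows "mtrace (outer u * outer w) = cnj (cinner u w) * cinner u w"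
proof -
  have "mtrace (outer u * outer w) = (\<Sum>i<dim_vec u. \<Sum>k<dim_vec u. u$i * cnj (u$k) * (w$k * cnj (w$i)))"
    unfolding mtrace_def using assms
    by (auto simp: scalar_prod_def intro!: sum.cong)
  also have "\<dots> = (\<Sum>i<dim_vec u. u$i * cnj (w$i)) * (\<Sum>k<dim_vec u. cnj (u$k) * w$k)"
    by (simp add: sum_product algebra_simps)
  also have "\<dots> = cnj (cinner u w) * cinner u w"
    unfolding cinner_def by (simp add: mult.commute)
  finally show ?thesis .
qed

lemma mult_idx: "i < dim_row A \<Longrightarrow> j < dim_col B \<Longrightarrow> dim_col A = n \<Longrightarrow> dim_row B = n \<Longrightarrow>
   (A*B)$$(i,j) = (\<Sum>k<n. A$$(i,k) * B$$(k,j))"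
  by (auto simp: scalar_prod_def atLeast0LessThan intro!: sum.cong)

lemma mult_vec_idx: "i < dim_row A \<Longrightarrow> dim_col A = n \<Longrightarrow> dim_vec v = n \<Longrightarrow> (A *\<^sub>v v)$i = (\<Sum>k<n. A$$(i,k) * v$k)"
  by (auto simp: scalar_prod_def atLeast0LessThan intro!: sum.cong)

lemma V_outer: assumes V: "V \<in> carrier_mat m n" and x: "x \<in> carrier_vec n"
  shows "V * outer x * mat_adjoint V = outer (V *\<^sub>v x)"
proof (rule eq_matI)
  have dV: "dim_row V = m" "dim_col V = n" and dx: "dim_vec x = n" using V x by auto
  fix i j assume i: "i < dim_row (outer (V *\<^sub>v x))" and j: "j < dim_col (outer (V *\<^sub>v x))"
  have im: "i < m" and jm: "j < m" using i j dV by auto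
  have "(V * outer x * mat_adjoint V) $$ (i,j) = (\<Sum>b<n. (V * outer x)$$(i,b) * mat_adjoint V $$ (b,j))"
    by (rule mult_idx) (use im jm dV dx in simp_all)
  also have "\<dots> = (\<Sum>b<n. (\<Sum>a<n. V$$(i,a) * (x$a * cnj (x$b))) * cnj (V$$(j,b)))"
    using im jm dV dx by (intro sum.cong refl) (simp add: mult_idx[where n=n] del: index_mult_mat)
  also have "\<dots> = (\<Sum>b<n. \<Sum>a<n. (V$$(i,a) * x$a) * cnj (V$$(j,b) * x$b))"
    by (intro sum.cong refl) (simp only: sum_distrib_right, rule sum.cong, simp, simp add: mult_ac)
  also have "\<dots> = (\<Sum>a<n. V$$(i,a) * x$a) * cnj (\<Sum>b<n. V$$(j,b) * x$b)"
    unfolding cnj_sum sum_product by (rule sum.swap)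
  also have "\<dots> = outer (V *\<^sub>v x) $$ (i,j)"
    using im jm dV dx by (simp add: mult_vec_idx[where n=n] del: index_mult_mat_vec)
  finally show "(V * outer x * mat_adjoint V) $$ (i,j) = outer (V *\<^sub>v x) $$ (i,j)" .
next
  have dV: "dim_row V = m" "dim_col V = n" and dx: "dim_vec x = n" using V x by auto
  show "dim_row (V * outer x * mat_adjoint V) = dim_row (outer (V *\<^sub>v x))"
    "dim_col (V * outer x * mat_adjoint V) = dim_col (outer (V *\<^sub>v x))"
    using dV by simp_all
qed

lemma cinner_iso: assumes V: "V \<in> carrier_mat m n" and U: "mat_adjoint V * V = 1\<^sub>m n"
  and x: "x \<in> carrier_vec n"
  shows "cinner (V *\<^sub>v x) (V *\<^sub>v x) = cinner x x"
proof -
  have e: "(\<Sum>i<m. cnj (V$$(i,a)) * V$$(i,b)) = (if a = b then 1 else 0)" if "a < n" "b < n" for a b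
  proof -
    have "(mat_adjoint V * V) $$ (a,b) = (\<Sum>i<m. cnj (V$$(i,a)) * V$$(i,b))"
      using V that by (auto simp: scalar_prod_def intro!: sum.cong)
    then show ?thesis using U that by simp
  qed
  have "cinner (V *\<^sub>v x) (V *\<^sub>v x) = (\<Sum>i<m. cnj (\<Sum>a<n. V$$(i,a) * x$a) * (\<Sum>b<n. V$$(i,b) * x$b))"
    unfolding cinner_def using V x by (auto simp: scalar_prod_def atLeast0LessThan intro!: sum.cong)
  also have "\<dots> = (\<Sum>i<m. \<Sum>a<n. \<Sum>b<n. (cnj (V$$(i,a)) * cnj (x$a)) * (V$$(i,b) * x$b))"
    by (simp add: cnj_sum sum_product)
  also have "\<dots> = (\<Sum>a<n. \<Sum>b<n. \<Sum>i<m. (cnj (V$$(i,a)) * cnj (x$a)) * (V$$(i,b) * x$b))"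
    by (simp add: sum.swap[of _ "{..<m}"] sum.swap[of _ "{..<m}" "{..<n}"])
  also have "\<dots> = (\<Sum>a<n. \<Sum>b<n. cnj (x$a) * x$b * (\<Sum>i<m. cnj (V$$(i,a)) * V$$(i,b)))"
  proof (intro sum.cong refl)
    fix a b
    show "(\<Sum>i<m. (cnj (V$$(i,a)) * cnj (x$a)) * (V$$(i,b) * x$b)) = cnj (x$a) * x$b * (\<Sum>i<m. cnj (V$$(i,a)) * V$$(i,b))"
      unfolding sum_distrib_left by (rule sum.cong) (auto simp: algebra_simps)
  qed
  also have "\<dots> = (\<Sum>a<n. \<Sum>b<n. cnj (x$a) * x$b * (if a = b then 1 else 0))"
    by (intro sum.cong refl) (simp add: e)
  also have "\<dots> = cinner x x"
    unfolding cinner_def using x by (simp add: if_distrib mult.commute cong: if_cong)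
  finally show ?thesis .
qed

lemma psd_herm: assumes "psd_mat d A" "i < d" "j < d" shows "A$$(j,i) = cnj (A$$(i,j))"
proof -
  have "A \<in> carrier_mat d d" "mat_adjoint A = A" using assms unfolding psd_mat_def by auto
  then have "mat_adjoint A $$ (j,i) = A $$ (j,i)" by simp
  then show ?thesis using assms \<open>A \<in> carrier_mat d d\<close> by simp
qed

lemma quad_two: assumes A: "A \<in> carrier_mat d d" and ij: "i < d" "j < d" "i \<noteq> j"
  shows "cinner (vec d (\<lambda>k. if k = i then s else if k = j then w else 0)) (A *\<^sub>v vec d (\<lambda>k. if k = i then s else if k = j then w else 0))
     = cnj s * (A$$(i,i) * s + A$$(i,j) * w) + cnj w * (A$$(j,i) * s + A$$(j,j) * w)"
proof -
  let ?v = "vec d (\<lambda>k. if k = i then s else if k = j then w else 0)"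
  have Av: "(A *\<^sub>v ?v) $ k = A$$(k,i) * s + A$$(k,j) * w" if "k < d" for k
  proof -
    have "(A *\<^sub>v ?v) $ k = (\<Sum>b<d. A$$(k,b) * ?v $ b)"
      using that A by (simp add: mult_vec_idx[where n=d] del: index_mult_mat_vec)
    also have "\<dots> = (\<Sum>b<d. (if b = i then A$$(k,i) * s else 0) + (if b = j then A$$(k,j) * w else 0))"
      using ij by (intro sum.cong refl) auto
    also have "\<dots> = A$$(k,i) * s + A$$(k,j) * w"
      using ij by (simp add: sum.distrib sum.delta)
    finally show ?thesis .
  qed
  have "cinner ?v (A *\<^sub>v ?v) = (\<Sum>k<d. cnj (?v $ k) * (A *\<^sub>v ?v) $ k)"
    unfolding cinner_def by simp
  also have "\<dots> = (\<Sum>k<d. (if k = i then cnj s * (A$$(i,i) * s + A$$(i,j) * w) else 0)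
       + (if k = j then cnj w * (A$$(j,i) * s + A$$(j,j) * w) else 0))"
    using ij by (intro sum.cong refl) (auto simp: Av)
  also have "\<dots> = cnj s * (A$$(i,i) * s + A$$(i,j) * w) + cnj w * (A$$(j,i) * s + A$$(j,j) * w)"
    using ij by (simp add: sum.distrib sum.delta)
  finally show ?thesis .
qed

lemma psd_diag: assumes "psd_mat d A" "i < d" shows "A$$(i,i) = of_real (Re (A$$(i,i)))" "0 \<le> Re (A$$(i,i))"
proof -
  have A: "A \<in> carrier_mat d d" using assms unfolding psd_mat_def by auto
  have "A$$(i,i) = cnj (A$$(i,i))" using psd_herm[OF assms(1,2,2)] .
  then have "Im (A$$(i,i)) = 0" by (metis cnj.simps(2) neg_equal_zero)
  then show "A$$(i,i) = of_real (Re (A$$(i,i)))" by (simp add: complex_eq_iff)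
  have Ae: "(A *\<^sub>v unit_vec d i) $ k = A$$(k,i)" if "k < d" for k
  proof -
    have "(A *\<^sub>v unit_vec d i) $ k = (\<Sum>b<d. A$$(k,b) * unit_vec d i $ b)"
      using that A by (simp add: mult_vec_idx[where n=d] del: index_mult_mat_vec)
    also have "\<dots> = (\<Sum>b<d. if b = i then A$$(k,i) else 0)"
      using assms(2) by (intro sum.cong refl) (auto simp: unit_vec_def)
    finally show ?thesis using assms(2) by (simp add: sum.delta)
  qed
  have "cinner (unit_vec d i) (A *\<^sub>v unit_vec d i) = (\<Sum>k<d. cnj (unit_vec d i $ k) * (A *\<^sub>v unit_vec d i) $ k)"
    unfolding cinner_def by simp
  also have "\<dots> = (\<Sum>k<d. if k = i then A$$(i,i) else 0)"
    using assms(2) by (intro sum.cong refl) (auto simp: Ae)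
  also have "\<dots> = A$$(i,i)" using assms(2) by (simp add: sum.delta)
  finally have "cinner (unit_vec d i) (A *\<^sub>v unit_vec d i) = A$$(i,i)" .
  moreover have "0 \<le> Re (cinner (unit_vec d i) (A *\<^sub>v unit_vec d i))"
    using assms unfolding psd_mat_def by auto
  ultimately show "0 \<le> Re (A$$(i,i))" by simp
qed

lemma form_calc:
  fixes a :: complex and p q s t :: real
  shows "Re (cnj (of_real s) * (of_real p * of_real s + a * (- (of_real t * cnj a)))
     + cnj (- (of_real t * cnj a)) * (cnj a * of_real s + of_real q * (- (of_real t * cnj a))))
     = s^2 * p - 2 * s * t * (cmod a)^2 + t^2 * (cmod a)^2 * q"
  unfolding cmod_power2 by (cases a) (simp add: algebra_simps power2_eq_square)

lemma psd_offdiag: assumes P: "psd_mat d A" and ij: "i < d" "j < d"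
  shows "(cmod (A$$(i,j)))^2 \<le> Re (A$$(i,i)) * Re (A$$(j,j))"
proof (cases "i = j")
  case True
  then show ?thesis using psd_diag[OF P ij(1)] by (metis norm_of_real power2_eq_square abs_of_nonneg real_sqrt_abs real_sqrt_pow2 order.refl abs_mult_self_eq)
next
  case False
  have A: "A \<in> carrier_mat d d" using P unfolding psd_mat_def by auto
  have gen: "0 \<le> (s^2) * Re (A$$(k,k)) - 2 * s * t * (cmod (A$$(k,l)))^2 + t^2 * (cmod (A$$(k,l)))^2 * Re (A$$(l,l))"
    if kl: "k < d" "l < d" "k \<noteq> l" for k l s t
  proof -
    let ?w = "- (of_real t * cnj (A$$(k,l)))"
    let ?v = "vec d (\<lambda>m. if m = k then of_real s else if m = l then ?w else 0)"
    have "?v \<in> carrier_vec d" by simp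
    then have "0 \<le> Re (cinner ?v (A *\<^sub>v ?v))" using P unfolding psd_mat_def by blast
    also have "cinner ?v (A *\<^sub>v ?v) = cnj (of_real s) * (A$$(k,k) * of_real s + A$$(k,l) * ?w) + cnj ?w * (A$$(l,k) * of_real s + A$$(l,l) * ?w)"
      by (rule quad_two[OF A kl])
    also have "A$$(k,k) = of_real (Re (A$$(k,k)))" using psd_diag[OF P kl(1)] by simp
    also have "A$$(l,l) = of_real (Re (A$$(l,l)))" using psd_diag[OF P kl(2)] by simp
    also have "A$$(l,k) = cnj (A$$(k,l))" using psd_herm[OF P kl(1,2)] .
    finally show ?thesis unfolding form_calc .
  qed
  let ?p = "Re (A$$(i,i))" and ?q = "Re (A$$(j,j))" and ?N = "(cmod (A$$(i,j)))^2"
  have p0: "0 \<le> ?p" and q0: "0 \<le> ?q" using psd_diag P ij by auto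
  have nji: "(cmod (A$$(j,i)))^2 = ?N" using psd_herm[OF P ij] by simp
  have k1: "0 \<le> s^2 * ?p - 2 * s * t * ?N + t^2 * ?N * ?q" for s t using gen[OF ij False] .
  have k2: "0 \<le> s^2 * ?q - 2 * s * t * ?N + t^2 * ?N * ?p" for s t using gen[OF ij(2,1)] False nji by auto
  show ?thesis
  proof (cases "?q > 0")
    case True
    have "0 \<le> ?q^2 * ?p - 2 * ?q * 1 * ?N + 1^2 * ?N * ?q" by (rule k1)
    then have "0 \<le> ?q * (?p * ?q - ?N)" by (simp add: algebra_simps power2_eq_square)
    then show ?thesis using True by (simp add: zero_le_mult_iff)
  next
    case qn: False
    then have q: "?q = 0" using q0 by simp
    show ?thesis
    proof (cases "?p > 0")
      case True
      have "0 \<le> ?p^2 * ?q - 2 * ?p * 1 * ?N + 1^2 * ?N * ?p" by (rule k2)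
      then have "0 \<le> ?p * (?p * ?q - ?N)" by (simp add: algebra_simps power2_eq_square)
      then show ?thesis using True by (simp add: zero_le_mult_iff)
    next
      case False
      then have "?p = 0" using p0 by simp
      have "0 \<le> 1^2 * ?p - 2 * 1 * 1 * ?N + 1^2 * ?N * ?q" by (rule k1)
      then show ?thesis using q \<open>?p = 0\<close> by simp
    qed
  qed
qed

lemma amgm2: fixes x y :: real shows "x * y \<le> ((x + y) / 2)^2"
proof -
  have "((x + y) / 2)^2 = x * y + ((x - y) / 2)^2"
    by (simp add: power2_eq_square field_simps)
  then show ?thesis by simp
qed

lemma amgm_aux:
  fixes al be p1 p2 q1 q2 :: real
  assumes "0 \<le> al" "0 \<le> be" "0 \<le> p1" "0 \<le> p2" "0 \<le> q1" "0 \<le> q2"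
    "al^2 \<le> p1 * p2" "be^2 \<le> q2 * q1"
  shows "al * be \<le> (p1 * q2 + p2 * q1) / 2"
proof -
  have "(al * be)^2 = al^2 * be^2" by (simp add: power_mult_distrib)
  also have "\<dots> \<le> (p1 * p2) * (q2 * q1)"
    using mult_mono[OF assms(7) assms(8)] assms(3,4) by simp
  also have "\<dots> = (p1 * q2) * (p2 * q1)" by (simp add: mult_ac)
  also have "\<dots> \<le> ((p1 * q2 + p2 * q1) / 2)^2" by (rule amgm2)
  finally have "(al * be)^2 \<le> ((p1 * q2 + p2 * q1) / 2)^2" .
  moreover have "0 \<le> (p1 * q2 + p2 * q1) / 2" using assms by simp
  ultimately show ?thesis by (rule power2_le_imp_le)
qed

lemma mtrace_mult: assumes "A \<in> carrier_mat d d" "B \<in> carrier_mat d d"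
  shows "mtrace (A * B) = (\<Sum>i<d. \<Sum>k<d. A$$(i,k) * B$$(k,i))"
  unfolding mtrace_def using assms by (intro sum.cong refl) (auto simp: mult_idx[where n=d] simp del: index_mult_mat(1))

lemma Re_mtrace: assumes "A \<in> carrier_mat d d" shows "Re (mtrace A) = (\<Sum>i<d. Re (A$$(i,i)))"
  unfolding mtrace_def using assms by (simp add: Re_sum)

lemma trace_psd_le: assumes PA: "psd_mat d A" and PB: "psd_mat d B"
  shows "Re (mtrace (A * B)) \<le> Re (mtrace A) * Re (mtrace B)"
proof -
  have A: "A \<in> carrier_mat d d" and B: "B \<in> carrier_mat d d" using PA PB unfolding psd_mat_def by auto
  let ?p = "\<lambda>i. Re (A$$(i,i))" and ?q = "\<lambda>i. Re (B$$(i,i))"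
  have "Re (mtrace (A * B)) = (\<Sum>i<d. \<Sum>k<d. Re (A$$(i,k) * B$$(k,i)))"
    by (simp add: mtrace_mult[OF A B] Re_sum)
  also have "\<dots> \<le> (\<Sum>i<d. \<Sum>k<d. (?p i * ?q k + ?p k * ?q i) / 2)"
  proof (intro sum_mono)
    fix i k assume i: "i \<in> {..<d}" and k: "k \<in> {..<d}"
    have "Re (A$$(i,k) * B$$(k,i)) \<le> cmod (A$$(i,k) * B$$(k,i))" by (rule complex_Re_le_cmod)
    also have "\<dots> = cmod (A$$(i,k)) * cmod (B$$(k,i))" by (simp add: norm_mult)
    also have "\<dots> \<le> (?p i * ?q k + ?p k * ?q i) / 2"
      using i k psd_offdiag[OF PA, of i k] psd_offdiag[OF PB, of k i] psd_diag(2)[OF PA] psd_diag(2)[OF PB]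
      by (intro amgm_aux) auto
    finally show "Re (A$$(i,k) * B$$(k,i)) \<le> (?p i * ?q k + ?p k * ?q i) / 2" .
  qed
  also have "\<dots> = ((\<Sum>i<d. \<Sum>k<d. ?p i * ?q k) + (\<Sum>i<d. \<Sum>k<d. ?p k * ?q i)) / 2"
    by (simp add: sum.distrib sum_divide_distrib add_divide_distrib)
  also have "(\<Sum>i<d. \<Sum>k<d. ?p k * ?q i) = (\<Sum>i<d. \<Sum>k<d. ?p i * ?q k)"
    by (rule sum.swap)
  also have "(\<Sum>i<d. \<Sum>k<d. ?p i * ?q k) = (\<Sum>i<d. ?p i) * (\<Sum>k<d. ?q k)"
    by (simp add: sum_product)
  also have "((\<Sum>i<d. ?p i) * (\<Sum>k<d. ?q k) + (\<Sum>i<d. ?p i) * (\<Sum>k<d. ?q k)) / 2 = Re (mtrace A) * Re (mtrace B)"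
    by (simp add: Re_mtrace[OF A] Re_mtrace[OF B])
  finally show ?thesis .
qed

lemma part1: assumes "M \<in> P_set d d id n n" shows "mtrace M \<le> real d"
proof -
  from assms obtain \<rho> \<Lambda> where M: "M \<in> carrier_mat n n" and rho: "\<forall>i<n. density d (\<rho> i)"
    and L: "POVM d n \<Lambda>" and Me: "\<forall>i<n. \<forall>j<n. M $$ (i,j) = Re (mtrace (\<Lambda> j * id (\<rho> i)))"
    unfolding P_set_def by blast
  have PL: "psd_mat d (\<Lambda> j)" if "j < n" for j using L that unfolding POVM_def by auto
  have Lc: "\<Lambda> j \<in> carrier_mat d d" if "j < n" for j using PL[OF that] unfolding psd_mat_def by auto
  have mtrace_M: "mtrace M = (\<Sum>i<n. M$$(i,i))" unfolding mtrace_def using M by simp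
  also have "\<dots> = (\<Sum>i<n. Re (mtrace (\<Lambda> i * \<rho> i)))" using Me by simp
  also have "\<dots> \<le> (\<Sum>i<n. Re (mtrace (\<Lambda> i)) * Re (mtrace (\<rho> i)))"
    using rho PL unfolding density_def by (intro sum_mono trace_psd_le) auto
  also have "\<dots> = (\<Sum>i<n. Re (mtrace (\<Lambda> i)))"
    using rho unfolding density_def by simp
  also have "\<dots> = (\<Sum>i<n. \<Sum>a<d. Re (\<Lambda> i $$ (a,a)))"
    by (intro sum.cong refl) (simp add: Re_mtrace[OF Lc])
  also have "\<dots> = (\<Sum>a<d. Re (\<Sum>i<n. \<Lambda> i $$ (a,a)))"
    by (simp add: Re_sum sum.swap[of _ "{..<n}"])
  also have "\<dots> = (\<Sum>a<d. 1)"
    using L unfolding POVM_def by (intro sum.cong refl) auto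
  finally show ?thesis by simp
qed

lemma sum9: fixes f :: "nat \<Rightarrow> 'a::comm_monoid_add" shows "(\<Sum>m<9. f m) = f 0 + f 1 + f 2 + f 3 + f 4 + f 5 + f 6 + f 7 + f 8"
  by (simp add: lessThan_nat_numeral add_ac)
lemma sum3: fixes f :: "nat \<Rightarrow> 'a::comm_monoid_add" shows "(\<Sum>m<3. f m) = f 0 + f 1 + f 2"
  by (simp add: lessThan_nat_numeral add_ac)
lemma sum8: fixes f :: "nat \<Rightarrow> 'a::comm_monoid_add" shows "(\<Sum>m<8. f m) = f 0 + f 1 + f 2 + f 3 + f 4 + f 5 + f 6 + f 7"
  by (simp add: lessThan_nat_numeral add_ac)
lemma sum6: fixes f :: "nat \<Rightarrow> 'a::comm_monoid_add" shows "(\<Sum>m<6. f m) = f 0 + f 1 + f 2 + f 3 + f 4 + f 5"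
  by (simp add: lessThan_nat_numeral add_ac)
lemma less9: "(m::nat) < 9 \<longleftrightarrow> m = 0 \<or> m = 1 \<or> m = 2 \<or> m = 3 \<or> m = 4 \<or> m = 5 \<or> m = 6 \<or> m = 7 \<or> m = 8"
  by auto
lemma less8: "(m::nat) < 8 \<longleftrightarrow> m = 0 \<or> m = 1 \<or> m = 2 \<or> m = 3 \<or> m = 4 \<or> m = 5 \<or> m = 6 \<or> m = 7"
  by auto
lemma less3: "(m::nat) < 3 \<longleftrightarrow> m = 0 \<or> m = 1 \<or> m = 2"
  by auto

lemma cinner_unit: assumes "i < d" "dim_vec u = d" shows "cinner (unit_vec d i) u = u $ i"
proof -
  have "cinner (unit_vec d i) u = (\<Sum>k<d. if k = i then u $ i else 0)"
    unfolding cinner_def using assms by (intro sum.cong refl) auto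
  also have "\<dots> = u $ i" using assms by (simp add: sum.delta)
  finally show ?thesis .
qed

lemma density_unit: assumes "i < d" shows "density d (outer (unit_vec d i))"
  unfolding density_def using assms
  by (simp add: outer_psd mtrace_outer cinner_unit)

lemma POVM_basis: "POVM d d (\<lambda>j. outer (unit_vec d j))"
  unfolding POVM_def
proof (intro conjI allI impI)
  fix j assume "j < d" then show "psd_mat d (outer (unit_vec d j))" by (simp add: outer_psd)
next
  fix a b assume a: "a < d" and b: "b < d"
  have "(\<Sum>j<d. outer (unit_vec d j) $$ (a,b)) = (\<Sum>j<d. if j = a then (if a = b then 1 else 0) else 0)"
    using a b by (intro sum.cong refl) auto
  also have "\<dots> = 1\<^sub>m d $$ (a,b)" using a b by (simp add: sum.delta)
  finally show "(\<Sum>j<d. outer (unit_vec d j) $$ (a,b)) = 1\<^sub>m d $$ (a,b)" .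
qed

lemma tr_unit: assumes "i < d" "dim_vec u = d"
  shows "Re (mtrace (outer (unit_vec d i) * outer u)) = (cmod (u $ i))^2"
proof -
  have "mtrace (outer (unit_vec d i) * outer u) = cnj (u $ i) * u $ i"
    using assms by (simp add: mtrace_outer_outer cinner_unit)
  also have "\<dots> = of_real ((cmod (u $ i))^2)"
    using complex_norm_square[of "u $ i"] by (simp add: mult.commute)
  finally show ?thesis by simp
qed

lemma Fc_upper: "F_c d d id \<le> ereal (real d)"
  unfolding F_c_def by (intro SUP_least) (simp add: part1)

lemma Fc_lower: assumes "P \<in> P_set dA dB N n n" shows "ereal (mtrace P) \<le> F_c dA dB N"
proof -
  have "ereal (mtrace P) \<le> (SUP P\<in>P_set dA dB N n n. ereal (mtrace P))"
    using assms by (rule SUP_upper)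
  also have "\<dots> \<le> F_c dA dB N" unfolding F_c_def by (rule SUP_upper) simp
  finally show ?thesis .
qed

lemma Fcmin_lower: assumes "P \<in> P_min V dA dB dE n n" shows "ereal (mtrace P) \<le> F_c_min V dA dB dE"
proof -
  have "ereal (mtrace P) \<le> (SUP P\<in>P_min V dA dB dE n n. ereal (mtrace P))"
    using assms by (rule SUP_upper)
  also have "\<dots> \<le> F_c_min V dA dB dE" unfolding F_c_min_def by (rule SUP_upper) simp
  finally show ?thesis .
qed

lemma Fc6: "F_c 6 6 id = 6"
proof (rule antisym)
  show "F_c 6 6 id \<le> 6" using Fc_upper[of 6] by simp
  define P0 where "P0 = mat 6 6 (\<lambda>(i,j). Re (mtrace (outer (unit_vec 6 j) * id (outer (unit_vec 6 i)))))"
  have "P0 \<in> P_set 6 6 id 6 6"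
    unfolding P_set_def
  proof (intro CollectI conjI exI)
    show "P0 \<in> carrier_mat 6 6" unfolding P0_def by simp
    show "\<forall>i<6. density 6 (outer (unit_vec 6 i))" by (simp add: density_unit)
    show "POVM 6 6 (\<lambda>j. outer (unit_vec 6 j))" by (rule POVM_basis)
    show "\<forall>i<6. \<forall>j<6. P0 $$ (i,j) = Re (mtrace (outer (unit_vec 6 j) * id (outer (unit_vec 6 i))))"
      unfolding P0_def by simp
  qed
  moreover have "mtrace P0 = 6"
  proof -
    have "mtrace P0 = (\<Sum>i<6. Re (mtrace (outer (unit_vec 6 i) * outer (unit_vec 6 i))))"
      unfolding mtrace_def P0_def by (intro sum.cong refl) simp_all
    also have "\<dots> = (\<Sum>i<(6::nat). (1::real))" by (intro sum.cong refl) (simp add: tr_unit)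
    finally show ?thesis by simp
  qed
  ultimately show "6 \<le> F_c 6 6 id" using Fc_lower[of P0] by simp
qed

definition rc :: "nat \<Rightarrow> nat \<Rightarrow> real" where
  "rc i m = (if i = 0 then (if m = 2 then 1 else 0)
     else if i = 1 then (if m = 3 then 1 else 0)
     else if i = 2 then (if m = 5 then 1 else 0)
     else if i = 3 then (if m = 6 then 1 else 0)
     else if i = 4 then (if m = 7 then 1 else 0)
     else if i < 8 \<and> (m = 0 \<or> m = 4 \<or> m = 8) then (if m = 4 * (i - 5) then - 2 / sqrt 6 else 1 / sqrt 6)
     else 0)"

definition psi :: "nat \<Rightarrow> complex vec" where
  "psi i = vec 9 (\<lambda>m. complex_of_real (rc i m))"

definition gg :: "nat \<Rightarrow> nat" where
  "gg m = (if m = 0 then 5 else if m = 1 then 0 else if m = 2 then 0 else if m = 3 then 1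
     else if m = 4 then 6 else if m = 5 then 2 else if m = 6 then 3 else if m = 7 then 4 else 7)"

definition qq :: "nat \<Rightarrow> nat \<Rightarrow> nat \<Rightarrow> real" where
  "qq j l k = (if gg (3 * l + k) = j then 1 else 0)"

lemma phi_dim[simp]: "dim_vec phi3_plus = 9"
  unfolding phi3_plus_def kron_vec_def ket3_def by simp

lemma ket01_dim[simp]: "dim_vec ket01 = 9"
  unfolding ket01_def kron_vec_def ket3_def by simp

lemma phi_idx: assumes "m < 9"
  shows "phi3_plus $ m = (if m = 0 \<or> m = 4 \<or> m = 8 then 1 / complex_of_real (sqrt 3) else 0)"
  using assms unfolding less9 phi3_plus_def kron_vec_def ket3_def
  by (elim disjE) simp_all

lemma ket01_idx: assumes "m < 9" shows "ket01 $ m = (if m = 1 then 1 else 0)"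
  using assms unfolding less9 ket01_def kron_vec_def ket3_def
  by (elim disjE) simp_all

lemma cinner_span: assumes "u \<in> span2 phi3_plus ket01"
  shows "\<exists>a b. cinner u (vec 9 f) = cnj a * (1 / complex_of_real (sqrt 3)) * (f 0 + f 4 + f 8) + cnj b * f 1"
proof -
  from assms obtain a b where u: "u = a \<cdot>\<^sub>v phi3_plus + b \<cdot>\<^sub>v ket01" unfolding span2_def by blast
  have "cinner u (vec 9 f) = (\<Sum>m<9. cnj (a * phi3_plus $ m + b * ket01 $ m) * f m)"
    unfolding cinner_def u by (intro sum.cong refl) auto
  also have "\<dots> = cnj a * (1 / complex_of_real (sqrt 3)) * (f 0 + f 4 + f 8) + cnj b * f 1"
    unfolding sum9 by (simp add: phi_idx ket01_idx algebra_simps)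
  finally show ?thesis by blast
qed

lemma rc_sums: assumes "i < 8" shows "rc i 0 + rc i 4 + rc i 8 = 0" "rc i 1 = 0"
  using assms unfolding less8 by (auto simp: rc_def)

lemma psi_orth: assumes "i < 8" shows "psi i \<in> orth_compl 9 (span2 phi3_plus ket01)"
  unfolding orth_compl_def
proof (intro CollectI conjI ballI)
  show "psi i \<in> carrier_vec 9" unfolding psi_def by simp
  fix u assume "u \<in> span2 phi3_plus ket01"
  from cinner_span[OF this, of "\<lambda>m. complex_of_real (rc i m)"] obtain a b where
    "cinner u (psi i) = cnj a * (1 / complex_of_real (sqrt 3)) * (complex_of_real (rc i 0) + complex_of_real (rc i 4) + complex_of_real (rc i 8)) + cnj b * complex_of_real (rc i 1)"
    unfolding psi_def by blast
  also have "\<dots> = cnj a * (1 / complex_of_real (sqrt 3)) * complex_of_real (rc i 0 + rc i 4 + rc i 8) + cnj b * complex_of_real (rc i 1)"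
    by simp
  also have "\<dots> = 0" using rc_sums[OF assms] by simp
  finally show "cinner u (psi i) = 0" .
qed

lemma rc_norm: assumes "i < 8" shows "(\<Sum>m<9. (rc i m)^2) = 1"
  using assms unfolding sum9 less8 by (auto simp: rc_def power_divide)

lemma psi_norm: assumes "i < 8" shows "cinner (psi i) (psi i) = 1"
proof -
  have "cinner (psi i) (psi i) = (\<Sum>m<9. complex_of_real ((rc i m)^2))"
    unfolding cinner_def psi_def by (intro sum.cong refl) (auto simp: power2_eq_square)
  also have "\<dots> = complex_of_real (\<Sum>m<9. (rc i m)^2)" by simp
  finally show ?thesis using rc_norm[OF assms] by simp
qed

lemma trace_val: "(\<Sum>i<8. \<Sum>l<3. \<Sum>k<3. qq i l k * (rc i (3 * l + k))^2) = 7"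
  unfolding sum8 sum3 by (simp add: qq_def gg_def rc_def power_divide)

lemma kron_unit_aux: assumes "i < 9" "l < 3" "k < 3"
  shows "(unit_vec 3 l $ (i div 3) * unit_vec 3 k $ (i mod 3) :: complex) = unit_vec 9 (3 * l + k) $ i"
proof -
  have iff: "(i = 3 * l + k) \<longleftrightarrow> (i div 3 = l \<and> i mod 3 = k)" using assms by presburger
  have "i div 3 < 3" "i mod 3 < 3" "3 * l + k < 9" using assms by auto
  then show ?thesis using assms iff by auto
qed

lemma kron_unit: assumes l: "l < 3" and k: "k < 3"
  shows "kron_mat (outer (unit_vec 3 l)) (outer (unit_vec 3 k)) = outer (unit_vec 9 (3 * l + k))"
proof (rule eq_matI)
  fix i j assume i: "i < dim_row (outer (unit_vec 9 (3 * l + k)))" and j: "j < dim_col (outer (unit_vec 9 (3 * l + k)))"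
  have i9: "i < 9" and j9: "j < 9" using i j by auto
  have d: "i div 3 < 3" "j div 3 < 3" "i mod 3 < 3" "j mod 3 < 3" using i9 j9 by auto
  have "kron_mat (outer (unit_vec 3 l)) (outer (unit_vec 3 k)) $$ (i,j)
     = (unit_vec 3 l $ (i div 3) * cnj (unit_vec 3 l $ (j div 3))) * (unit_vec 3 k $ (i mod 3) * cnj (unit_vec 3 k $ (j mod 3)))"
    unfolding kron_mat_def using i9 j9 d by simp
  also have "\<dots> = (unit_vec 3 l $ (i div 3) * unit_vec 3 k $ (i mod 3)) * cnj (unit_vec 3 l $ (j div 3) * unit_vec 3 k $ (j mod 3))"
    by (simp add: mult_ac)
  also have "\<dots> = unit_vec 9 (3 * l + k) $ i * cnj (unit_vec 9 (3 * l + k) $ j)"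
    by (simp only: kron_unit_aux[OF i9 l k] kron_unit_aux[OF j9 l k])
  also have "\<dots> = outer (unit_vec 9 (3 * l + k)) $$ (i,j)" using i9 j9 by simp
  finally show "kron_mat (outer (unit_vec 3 l)) (outer (unit_vec 3 k)) $$ (i,j) = outer (unit_vec 9 (3 * l + k)) $$ (i,j)" .
qed (simp_all add: kron_mat_def)

lemma part3: assumes Vc: "V \<in> carrier_mat 9 7" and U: "mat_adjoint V * V = 1\<^sub>m 7"
  and R: "{V *\<^sub>v x | x. x \<in> carrier_vec 7} = orth_compl 9 (span2 phi3_plus ket01)"
  shows "ereal (20/3) \<le> F_c_min V 7 3 3"
proof -
  have "\<forall>i. \<exists>x. i < 8 \<longrightarrow> x \<in> carrier_vec 7 \<and> V *\<^sub>v x = psi i"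
  proof
    fix i
    show "\<exists>x. i < 8 \<longrightarrow> x \<in> carrier_vec 7 \<and> V *\<^sub>v x = psi i"
    proof (cases "i < 8")
      case True
      have "psi i \<in> orth_compl 9 (span2 phi3_plus ket01)" by (rule psi_orth[OF True])
      then have "psi i \<in> {V *\<^sub>v x | x. x \<in> carrier_vec 7}" by (simp only: R)
      then obtain x where "psi i = V *\<^sub>v x" "x \<in> carrier_vec 7" by (auto simp only: mem_Collect_eq)
      then show ?thesis by (intro exI[of _ x]) simp
    qed simp
  qed
  then obtain xs where xs0: "\<forall>i. i < 8 \<longrightarrow> xs i \<in> carrier_vec 7 \<and> V *\<^sub>v xs i = psi i"
    by (rule choice[THEN exE])
  have xs: "xs i \<in> carrier_vec 7 \<and> V *\<^sub>v xs i = psi i" if "i < 8" for i using xs0 that by blast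
  define \<rho> where "\<rho> i = outer (xs i)" for i
  define L3 where "L3 l = outer (unit_vec 3 l)" for l
  define P where "P = mat 8 8 (\<lambda>(i,j). \<Sum>l<3. \<Sum>k<3. qq j l k * Re (mtrace (kron_mat (L3 l) (L3 k) * (V * \<rho> i * mat_adjoint V))))"
  have Pc: "P \<in> carrier_mat 8 8" unfolding P_def by simp
  have dens: "\<forall>i<8. density 7 (\<rho> i)"
  proof (intro allI impI)
    fix i :: nat assume i: "i < 8"
    have "mtrace (\<rho> i) = cinner (xs i) (xs i)" unfolding \<rho>_def by (rule mtrace_outer)
    also have "\<dots> = cinner (V *\<^sub>v xs i) (V *\<^sub>v xs i)" using cinner_iso[OF Vc U, of "xs i"] xs[OF i] by argo
    also have "\<dots> = 1" using xs[OF i] psi_norm[OF i] by simp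
    finally have "mtrace (\<rho> i) = 1" .
    moreover have "psd_mat 7 (\<rho> i)" unfolding \<rho>_def using xs[OF i] by (intro outer_psd) simp
    ultimately show "density 7 (\<rho> i)" unfolding density_def by (intro conjI)
  qed
  have pov: "POVM 3 3 L3" unfolding L3_def by (rule POVM_basis)
  have gg8: "gg m < 8" for m unfolding gg_def by simp
  have qcond: "\<forall>l<3. \<forall>k<3. (\<forall>j<8. 0 \<le> qq j l k) \<and> (\<Sum>j<8. qq j l k) = 1"
    using gg8 by (simp add: qq_def sum.delta')
  have Pe: "\<forall>i<8. \<forall>j<8. P $$ (i,j) = (\<Sum>l<3. \<Sum>k<3. qq j l k * Re (mtrace (kron_mat (L3 l) (L3 k) * (V * \<rho> i * mat_adjoint V))))"
    unfolding P_def by simp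
  have Pmem: "P \<in> P_min V 7 3 3 8 8"
    unfolding P_min_def mem_Collect_eq
    apply (rule conjI[OF Pc])
    apply (rule exI[of _ \<rho>], rule exI[of _ 3], rule exI[of _ L3], rule exI[of _ 3], rule exI[of _ L3], rule exI[of _ qq])
    by (intro conjI dens pov qcond Pe)
  have tm: "Re (mtrace (kron_mat (L3 l) (L3 k) * (V * \<rho> i * mat_adjoint V))) = (rc i (3 * l + k))^2"
    if i: "i < 8" and l: "l < 3" and k: "k < 3" for i l k
  proof -
    have m9: "3 * l + k < 9" using l k by simp
    have "V * \<rho> i * mat_adjoint V = outer (psi i)"
      unfolding \<rho>_def using V_outer[OF Vc, of "xs i"] xs[OF i] by simp
    moreover have "kron_mat (L3 l) (L3 k) = outer (unit_vec 9 (3 * l + k))"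
      unfolding L3_def by (rule kron_unit[OF l k])
    ultimately have "Re (mtrace (kron_mat (L3 l) (L3 k) * (V * \<rho> i * mat_adjoint V))) = (cmod (psi i $ (3 * l + k)))^2"
      using tr_unit[OF m9, of "psi i"] by (simp add: psi_def)
    also have "\<dots> = (rc i (3 * l + k))^2" using m9 by (simp add: psi_def)
    finally show ?thesis .
  qed
  have "mtrace P = (\<Sum>i<8. P $$ (i,i))" unfolding mtrace_def using Pc by simp
  also have "\<dots> = (\<Sum>i<8. \<Sum>l<3. \<Sum>k<3. qq i l k * (rc i (3 * l + k))^2)"
  proof (rule sum.cong[OF refl])
    fix i :: nat assume "i \<in> {..<8}" then have i: "i < 8" by simp
    have "P $$ (i,i) = (\<Sum>l<3. \<Sum>k<3. qq i l k * Re (mtrace (kron_mat (L3 l) (L3 k) * (V * \<rho> i * mat_adjoint V))))"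
      using Pe i by simp
    also have "\<dots> = (\<Sum>l<3. \<Sum>k<3. qq i l k * (rc i (3 * l + k))^2)"
      using i tm by (intro sum.cong refl) simp
    finally show "P $$ (i,i) = (\<Sum>l<3. \<Sum>k<3. qq i l k * (rc i (3 * l + k))^2)" .
  qed
  also have "\<dots> = 7" by (rule trace_val)
  finally have "mtrace P = 7" .
  then have "ereal 7 \<le> F_c_min V 7 3 3" using Fcmin_lower[OF Pmem] by simp
  then show ?thesis by (rule order.trans[rotated]) simp
qed

theorem proposition2:
  fixes V :: "complex mat"
  assumes "V \<in> carrier_mat 9 7"
    and "mat_adjoint V * V = 1\<^sub>m 7"
    and "{V *\<^sub>v x | x. x \<in> carrier_vec 7} = orth_compl 9 (span2 phi3_plus ket01)"
  shows "(\<forall>d n M. M \<in> P_set d d id n n \<longrightarrow> mtrace M \<le> real d)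
     \<and> F_c 6 6 id = 6
     \<and> ereal (20/3) \<le> F_c_min V 7 3 3
     \<and> ereal (20/3) > F_c 6 6 id"
  using part1 Fc6 part3[OF assms] by simp

end
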